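(* Let $G$ be a gap sequence of genus $g$, $\lambda=(\lambda_1,\dots,\lambda_g)$ its associated partition, and $0\le k\le g$. (i) $\partial_{a^{(k)}_1}\cdots\partial_{a^{(k)}_{m_k}}s_\lambda\big(\sum_{i=1}^k[x_i]\big)=c_k\,s_{(\lambda_1,\dots,\lambda_k)}\big(\sum_{i=1}^k[x_i]\big)$. (ii) If $\mu=(\mu_1,\dots,\mu_g)$ is a partition with $\mu_i=\lambda_i$ for $k+1\le i\le g$, then $\partial_{a^{(k)}_1}\cdots\partial_{a^{(k)}_{m_k}}s_\mu\big(\sum_{i=1}^k[x_i]\big)=c_k\,s_{(\mu_1,\dots,\mu_k)}\big(\sum_{i=1}^k[x_i]\big)$ with the same $c_k$.
   Context: For $t=(t_1,t_2,\dots)$ define polynomials $p_m(t)$ by $\exp(\sum_{m\ge1}t_mk^m)=\sum_{m\ge0}p_m(t)k^m$, and $p_m=0$ for $m<0$. For a partition $\mu=(\mu_1\ge\dots\ge\mu_l)$, $s_\mu(t)=\det(p_{\mu_i-i+j}(t))_{1\le i,j\le l}$. $[x]=(x,x^2/2,x^3/3,\dots)$, and $\partial_i=\partial/\partial t_i$. A gap sequence of genus $g\ge1$ is a set $G\subset\mathbb Z_{\ge0}$ with $\#G=g$ whose complement $G^c$ contains $0$ and is closed under addition; write $G=\{w_1<\dots<w_g\}$ and $G^c=\{0=w_1^*<w_2^*<\cdots\}$. Its partition is $\lambda=(w_g,\dots,w_1)-(g-1,\dots,1,0)$. For $0\le k\le g-1$: $m_k=\#\{i:w_i^*<g-k\}$,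 $a^{(k)}_j=w_{g-k-j+1}-w_j^*$ ($1\le j\le m_k$), and $c_k=\pm1$ is the sign of the permutation sending $(w_1^*,\dots,w_{m_k}^*,w_{g-k-m_k},\dots,w_1)$ to $(g-k-1,g-k-2,\dots,1,0)$. Conventions: for $k=0$, $s_{(\lambda_1,\dots,\lambda_k)}(\sum_{i=1}^k[x_i])=1$ (and the left side is evaluated at $t=0$); for $k=g$ the product of derivatives is the identity and $c_g=1$. *)

theory Defs
  imports "HOL-Computational_Algebra.Formal_Power_Series" "HOL-Library.Infinite_Set"
    "HOL-Combinatorics.Permutations" "Jordan_Normal_Form.Determinant" "HOL-Analysis.Derivative"
begin

text \<open>p_m(t): coefficient of k^m in exp(sum_{m>=1} t_m k^m); zero for m < 0.
  Times t are functions nat => real; t 0 is unused.\<close>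
definition pfun :: "int \<Rightarrow> (nat \<Rightarrow> real) \<Rightarrow> real" where
  "pfun m t = (if m < 0 then 0 else
     fps_nth (fps_compose (fps_exp 1) (Abs_fps (\<lambda>n. if n = 0 then 0 else t n))) (nat m))"

definition schur :: "nat list \<Rightarrow> (nat \<Rightarrow> real) \<Rightarrow> real" where
  "schur mu t = Determinant.det (Matrix.mat (length mu) (length mu)
      (\<lambda>(i, j). pfun (int (mu ! i) - int i + int j) t))"

text \<open>sum_{i=1}^k [x_i], i.e. t_m = sum_{i=1}^k x_i^m / m.\<close>
definition bracket_sum :: "nat \<Rightarrow> (nat \<Rightarrow> real) \<Rightarrow> (nat \<Rightarrow> real)" where
  "bracket_sum k x = (\<lambda>m. \<Sum>i = 1..k. x i ^ m / real m)"

definition pderiv_t :: "nat \<Rightarrow> ((nat \<Rightarrow> real) \<Rightarrow> real) \<Rightarrow> (nat \<Rightarrow> real) \<Rightarrow> real" where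
  "pderiv_t i F t = deriv (\<lambda>s. F (t(i := s))) (t i)"

definition pderivs :: "nat list \<Rightarrow> ((nat \<Rightarrow> real) \<Rightarrow> real) \<Rightarrow> (nat \<Rightarrow> real) \<Rightarrow> real" where
  "pderivs as F = foldr pderiv_t as F"

definition is_gap_sequence :: "nat set \<Rightarrow> nat \<Rightarrow> bool" where
  "is_gap_sequence G g \<longleftrightarrow> g \<ge> 1 \<and> finite G \<and> card G = g \<and> 0 \<notin> G \<and>
     (\<forall>a b. a \<notin> G \<longrightarrow> b \<notin> G \<longrightarrow> a + b \<notin> G)"

text \<open>w_i (1-indexed, increasing)\<close>
definition gap :: "nat set \<Rightarrow> nat \<Rightarrow> nat" where
  "gap G i = sorted_list_of_set G ! (i - 1)"

text \<open>w*_j (1-indexed, increasing), w*_1 = 0\<close>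
definition nongap :: "nat set \<Rightarrow> nat \<Rightarrow> nat" where
  "nongap G j = enumerate (- G) (j - 1)"

text \<open>lambda = (w_g,...,w_1) - (g-1,...,0)\<close>
definition gap_partition :: "nat set \<Rightarrow> nat \<Rightarrow> nat list" where
  "gap_partition G g = map (\<lambda>i. gap G (g - i) - (g - 1 - i)) [0..<g]"

definition m_k :: "nat set \<Rightarrow> nat \<Rightarrow> nat \<Rightarrow> nat" where
  "m_k G g k = card {i. 1 \<le> i \<and> nongap G i < g - k}"

definition a_seq :: "nat set \<Rightarrow> nat \<Rightarrow> nat \<Rightarrow> nat list" where
  "a_seq G g k = map (\<lambda>j. gap G (g - k - j + 1) - nongap G j) [1..<m_k G g k + 1]"

definition c_seq :: "nat set \<Rightarrow> nat \<Rightarrow> nat \<Rightarrow> nat list" where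
  "c_seq G g k = map (nongap G) [1..<m_k G g k + 1] @ map (gap G) (rev [1..<g - k - m_k G g k + 1])"

text \<open>sign of the permutation sending c_seq to (g-k-1,...,1,0): position i goes to the
  position of its entry in the target list\<close>
definition c_sign :: "nat set \<Rightarrow> nat \<Rightarrow> nat \<Rightarrow> int" where
  "c_sign G g k = sign (\<lambda>i. if i < g - k then g - k - 1 - c_seq G g k ! i else i)"

end

theory Submission
  imports Defs
begin


definition Afps :: "(nat \<Rightarrow> real) \<Rightarrow> real fps" where
  "Afps t = Abs_fps (\<lambda>n. if n = 0 then 0 else t n)"
definition Efps :: "(nat \<Rightarrow> real) \<Rightarrow> real fps" where
  "Efps t = fps_compose (fps_exp 1) (Afps t)"

lemma pfun_Efps: "pfun m t = (if m < 0 then 0 else fps_nth (Efps t) (nat m))"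
  unfolding pfun_def Efps_def Afps_def by simp

lemma pfun_neg[simp]: "m < 0 \<Longrightarrow> pfun m t = 0"
  unfolding pfun_def by simp

lemma pfun_nat: "pfun (int n) t = fps_nth (Efps t) n"
  unfolding pfun_Efps by simp

lemma pfun_0[simp]: "pfun 0 t = 1"
  unfolding pfun_Efps Efps_def Afps_def by (simp add: fps_compose_nth_0)

lemma Efps_deriv: "fps_deriv (Efps t) = Efps t * fps_deriv (Afps t)"
proof -
  have "fps_nth (Afps t) 0 = 0" by (simp add: Afps_def)
  then show ?thesis unfolding Efps_def
    by (simp add: fps_compose_deriv fps_const_mult_apply_left[symmetric])
qed

lemma pfun_rec_nat: "real (Suc n) * pfun (int (Suc n)) t
   = (\<Sum>j = 1..Suc n. real j * t j * pfun (int (Suc n) - int j) t)"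
proof -
  have "real (Suc n) * pfun (int (Suc n)) t = fps_nth (fps_deriv (Efps t)) n"
    using pfun_nat[of "Suc n" t] by (simp add: fps_deriv_nth del: of_nat_Suc)
  also have "\<dots> = (\<Sum>i = 0..n. fps_nth (Efps t) i * (real (Suc (n - i)) * t (Suc (n - i))))"
    unfolding Efps_deriv fps_mult_nth by (simp add: fps_deriv_nth Afps_def)
  also have "\<dots> = (\<Sum>j = 1..Suc n. real j * t j * pfun (int (Suc n) - int j) t)"
  proof (rule sum.reindex_bij_witness[where i = "\<lambda>j. Suc n - j" and j = "\<lambda>i. Suc n - i"])
    fix i assume i: "i \<in> {0..n}"
    then have "int (Suc n) - int (Suc n - i) = int i" by auto
    then show "real (Suc n - i) * t (Suc n - i) * pfun (int (Suc n) - int (Suc n - i)) t = fps_nth (Efps t) i * (real (Suc (n - i)) * t (Suc (n - i)))"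
      using i by (simp add: pfun_nat Suc_diff_le)
  qed auto
  finally show ?thesis .
qed

lemma pfun_rec: fixes M :: int and N :: nat assumes "M \<le> int N"
  shows "(\<Sum>j = 1..N. real j * t j * pfun (M - int j) t) = of_int M * pfun M t"
proof (cases "M \<le> 0")
  case True
  then have "(\<Sum>j = 1..N. real j * t j * pfun (M - int j) t) = 0"
    by (intro sum.neutral) auto
  moreover have "of_int M * pfun M t = 0" using True by (cases "M = 0") auto
  ultimately show ?thesis by simp
next
  case False
  then obtain n where n: "M = int (Suc n)" by (metis gr0_implies_Suc linorder_not_le of_nat_0_less_iff pos_int_cases)
  then have sn: "Suc n \<le> N" using assms by simp
  have "(\<Sum>j = 1..N. real j * t j * pfun (M - int j) t)
     = (\<Sum>j = 1..Suc n. real j * t j * pfun (M - int j) t)"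
    using sn n by (intro sum.mono_neutral_right) auto
  then show ?thesis using pfun_rec_nat[of n t] n by simp
qed

lemma upd_deriv: "((\<lambda>s. (t(a := s)) j) has_real_derivative (if j = a then 1 else 0)) (at s)"
  by (cases "j = a") (auto intro!: derivative_eq_intros)

lemma pfun_deriv:
  assumes a: "a \<ge> 1"
  shows "((\<lambda>s. pfun m (t(a := s))) has_real_derivative pfun (m - int a) (t(a := s))) (at s)"
proof (induction "nat m" arbitrary: m rule: less_induct)
  case less
  show ?case
  proof (cases "m \<le> 0")
    case True
    show ?thesis
    proof (cases "m = 0")
      case True
      then show ?thesis using a by simp
    next
      case False
      with True show ?thesis using a by simp
    qed
  next
    case False
    then obtain n where n: "m = int (Suc n)" by (metis gr0_implies_Suc linorder_not_le of_nat_0_less_iff pos_int_cases)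
    define T where "T = (\<lambda>s. t(a := s))"
    have eq: "\<And>s. pfun m (T s) = (\<Sum>j = 1..Suc n. real j * T s j * pfun (m - int j) (T s)) / real (Suc n)"
      using pfun_rec_nat[of n] n by (simp add: field_simps)
    have IH: "\<And>j. j \<in> {1..Suc n} \<Longrightarrow> ((\<lambda>s. pfun (m - int j) (T s)) has_real_derivative pfun (m - int j - int a) (T s)) (at s)"
      using less n unfolding T_def by (intro less) auto
    have D: "((\<lambda>s. (\<Sum>j = 1..Suc n. real j * T s j * pfun (m - int j) (T s))) has_real_derivative
        (\<Sum>j = 1..Suc n. real j * ((if j = a then 1 else 0) * pfun (m - int j) (T s) + T s j * pfun (m - int j - int a) (T s)))) (at s)"
    proof (rule DERIV_sum)
      fix j assume j: "j \<in> {1..Suc n}"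
      have 1: "((\<lambda>s. T s j) has_real_derivative (if j = a then 1 else 0)) (at s)" unfolding T_def by (rule upd_deriv)
      have "((\<lambda>s. T s j * pfun (m - int j) (T s)) has_real_derivative ((if j = a then 1 else 0) * pfun (m - int j) (T s) + T s j * pfun (m - int j - int a) (T s))) (at s)"
        using DERIV_mult[OF 1 IH[OF j]] by (simp add: algebra_simps)
      from DERIV_cmult[OF this, of "real j"]
      show "((\<lambda>s. real j * T s j * pfun (m - int j) (T s)) has_real_derivative
        real j * ((if j = a then 1 else 0) * pfun (m - int j) (T s) + T s j * pfun (m - int j - int a) (T s))) (at s)"
        by (simp add: mult.assoc)
    qed
    have "(\<Sum>j = 1..Suc n. real j * ((if j = a then 1 else 0) * pfun (m - int j) (T s) + T s j * pfun (m - int j - int a) (T s)))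
       = (\<Sum>j = 1..Suc n. real j * (if j = a then 1 else 0) * pfun (m - int j) (T s))
         + (\<Sum>j = 1..Suc n. real j * T s j * pfun ((m - int a) - int j) (T s))"
      by (simp add: sum.distrib algebra_simps)
    also have "(\<Sum>j = 1..Suc n. real j * (if j = a then 1 else 0) * pfun (m - int j) (T s))
       = (if a \<le> Suc n then real a * pfun (m - int a) (T s) else 0)"
    proof -
      have "(\<Sum>j = 1..Suc n. real j * (if j = a then 1 else 0) * pfun (m - int j) (T s))
         = (\<Sum>j \<in> {1..Suc n}. if j = a then real a * pfun (m - int a) (T s) else 0)"
        by (intro sum.cong) auto
      also have "\<dots> = (if a \<in> {1..Suc n} then real a * pfun (m - int a) (T s) else 0)"
        by (simp only: sum.delta[OF finite_atLeastAtMost])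
      finally show ?thesis using a by simp
    qed
    also have "(\<Sum>j = 1..Suc n. real j * T s j * pfun ((m - int a) - int j) (T s)) = of_int (m - int a) * pfun (m - int a) (T s)"
      using n by (intro pfun_rec) simp
    also have "(if a \<le> Suc n then real a * pfun (m - int a) (T s) else 0) + of_int (m - int a) * pfun (m - int a) (T s)
       = real (Suc n) * pfun (m - int a) (T s)"
      using n by (auto simp: algebra_simps)
    finally have "((\<lambda>s. (\<Sum>j = 1..Suc n. real j * T s j * pfun (m - int j) (T s)) / real (Suc n)) has_real_derivative
        pfun (m - int a) (T s)) (at s)"
      using DERIV_cdivide[OF D, of "real (Suc n)"] by simp
    moreover have "(\<lambda>s. pfun m (T s)) = (\<lambda>s. (\<Sum>j = 1..Suc n. real j * T s j * pfun (m - int j) (T s)) / real (Suc n))"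
      using eq by auto
    ultimately have "((\<lambda>s. pfun m (T s)) has_real_derivative pfun (m - int a) (T s)) (at s)" by simp
    then show ?thesis by (simp add: T_def)
  qed
qed



definition DM :: "nat \<Rightarrow> (nat \<Rightarrow> int) \<Rightarrow> (nat \<Rightarrow> real) \<Rightarrow> real mat" where
  "DM g R t = Matrix.mat g g (\<lambda>(i,j). pfun (R i + int j) t)"

definition D :: "nat \<Rightarrow> (nat \<Rightarrow> int) \<Rightarrow> (nat \<Rightarrow> real) \<Rightarrow> real" where
  "D g R t = Determinant.det (DM g R t)"

lemma DM_carrier[simp]: "DM g R t \<in> carrier_mat g g"
  by (simp add: DM_def)

lemma DM_index[simp]: "i < g \<Longrightarrow> j < g \<Longrightarrow> DM g R t $$ (i,j) = pfun (R i + int j) t"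
  by (simp add: DM_def)

lemma D_expand: "D g R t = (\<Sum>p \<in> {p. p permutes {0..<g}}. of_int (sign p) * (\<Prod>i = 0..<g. pfun (R i + int (p i)) t))"
  unfolding D_def
  apply (subst det_def'[OF DM_carrier])
  apply (intro sum.cong refl)
  by simp

lemma D_cong: "(\<And>i. i < g \<Longrightarrow> R i = R' i) \<Longrightarrow> D g R t = D g R' t"
  unfolding D_expand by (intro sum.cong prod.cong refl) auto

lemma D_deriv:
  assumes a: "a \<ge> 1"
  shows "((\<lambda>s. D g R (t(a := s))) has_real_derivative (\<Sum>r<g. D g (R(r := R r - int a)) (t(a := s)))) (at s)"
proof -
  define T where "T = (\<lambda>s. t(a := s))"
  let ?P = "{p. p permutes {0..<g}}"
  have fin: "finite ?P" by (simp add: finite_permutations)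
  have 1: "((\<lambda>s. D g R (T s)) has_real_derivative
     (\<Sum>p \<in> ?P. of_int (sign p) * (\<Sum>r\<in>{0..<g}. pfun (R r + int (p r) - int a) (T s) * (\<Prod>y\<in>{0..<g}-{r}. pfun (R y + int (p y)) (T s))))) (at s)"
    unfolding D_expand
  proof (rule DERIV_sum)
    fix p assume "p \<in> ?P"
    have "((\<lambda>s. \<Prod>i = 0..<g. pfun (R i + int (p i)) (T s)) has_real_derivative
       (\<Sum>r\<in>{0..<g}. pfun (R r + int (p r) - int a) (T s) * (\<Prod>y\<in>{0..<g}-{r}. pfun (R y + int (p y)) (T s)))) (at s)"
      by (rule has_field_derivative_prod[where f = "\<lambda>i s. pfun (R i + int (p i)) (T s)", simplified])
         (unfold T_def, rule pfun_deriv[OF a])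
    then show "((\<lambda>s. of_int (sign p) * (\<Prod>i = 0..<g. pfun (R i + int (p i)) (T s))) has_real_derivative
       of_int (sign p) * (\<Sum>r\<in>{0..<g}. pfun (R r + int (p r) - int a) (T s) * (\<Prod>y\<in>{0..<g}-{r}. pfun (R y + int (p y)) (T s)))) (at s)"
      by (rule DERIV_cmult)
  qed
  have 2: "(\<Sum>p \<in> ?P. of_int (sign p) * (\<Sum>r\<in>{0..<g}. pfun (R r + int (p r) - int a) (T s) * (\<Prod>y\<in>{0..<g}-{r}. pfun (R y + int (p y)) (T s))))
     = (\<Sum>r<g. D g (R(r := R r - int a)) (T s))"
  proof -
    have "(\<Sum>p \<in> ?P. of_int (sign p) * (\<Sum>r\<in>{0..<g}. pfun (R r + int (p r) - int a) (T s) * (\<Prod>y\<in>{0..<g}-{r}. pfun (R y + int (p y)) (T s))))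
      = (\<Sum>r\<in>{0..<g}. \<Sum>p \<in> ?P. of_int (sign p) * (pfun (R r + int (p r) - int a) (T s) * (\<Prod>y\<in>{0..<g}-{r}. pfun (R y + int (p y)) (T s))))"
      by (simp add: sum_distrib_left sum.swap[of _ ?P])
    also have "\<dots> = (\<Sum>r\<in>{0..<g}. D g (R(r := R r - int a)) (T s))"
    proof (intro sum.cong refl)
      fix r assume r: "r \<in> {0..<g}"
      show "(\<Sum>p \<in> ?P. of_int (sign p) * (pfun (R r + int (p r) - int a) (T s) * (\<Prod>y\<in>{0..<g}-{r}. pfun (R y + int (p y)) (T s))))
         = D g (R(r := R r - int a)) (T s)"
        unfolding D_expand
      proof (intro sum.cong refl arg_cong2[where f = "(*)"])
        fix p
        have "(\<Prod>i = 0..<g. pfun ((R(r := R r - int a)) i + int (p i)) (T s))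
           = pfun ((R(r := R r - int a)) r + int (p r)) (T s) * (\<Prod>i \<in> {0..<g} - {r}. pfun ((R(r := R r - int a)) i + int (p i)) (T s))"
          using r by (subst prod.remove[of _ r]) auto
        also have "(\<Prod>i \<in> {0..<g} - {r}. pfun ((R(r := R r - int a)) i + int (p i)) (T s)) = (\<Prod>y\<in>{0..<g}-{r}. pfun (R y + int (p y)) (T s))"
          by (intro prod.cong) auto
        finally show "pfun (R r + int (p r) - int a) (T s) * (\<Prod>y\<in>{0..<g}-{r}. pfun (R y + int (p y)) (T s))
           = (\<Prod>i = 0..<g. pfun ((R(r := R r - int a)) i + int (p i)) (T s))"
          by (simp add: algebra_simps)
      qed
    qed
    finally show ?thesis by (simp add: atLeast0LessThan)
  qed
  have "((\<lambda>s. D g R (T s)) has_real_derivative (\<Sum>r<g. D g (R(r := R r - int a)) (T s))) (at s)"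
    using 1 by (simp only: 2)
  then show ?thesis by (simp add: T_def)
qed

fun lowr :: "(nat \<Rightarrow> int) \<Rightarrow> nat list \<Rightarrow> nat list \<Rightarrow> (nat \<Rightarrow> int)" where
  "lowr R (a # as) (r # rs) = lowr (R(r := R r - int a)) as rs"
| "lowr R _ _ = R"

lemma lowr_commute: "lowr (R(r := R r - c)) as rs = (lowr R as rs)(r := lowr R as rs r - c)"
proof (induction R as rs arbitrary: c rule: lowr.induct)
  case (1 R a as r' rs)
  have eq: "(R(r := R r - c))(r' := (R(r := R r - c)) r' - int a) = (R(r' := R r' - int a))(r := (R(r' := R r' - int a)) r - c)"
    by (auto simp: fun_eq_iff)
  have "lowr (R(r := R r - c)) (a # as) (r' # rs) = lowr ((R(r := R r - c))(r' := (R(r := R r - c)) r' - int a)) as rs"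
    by (simp only: lowr.simps)
  also have "\<dots> = lowr ((R(r' := R r' - int a))(r := (R(r' := R r' - int a)) r - c)) as rs"
    by (simp only: eq)
  also have "\<dots> = (lowr (R(r' := R r' - int a)) as rs)(r := lowr (R(r' := R r' - int a)) as rs r - c)"
    by (rule "1.IH")
  finally show ?case by (simp only: lowr.simps)
qed auto

definition rowlists :: "nat \<Rightarrow> nat \<Rightarrow> nat list set" where
  "rowlists m g = {rs. set rs \<subseteq> {0..<g} \<and> length rs = m}"

lemma rowlists_finite[simp]: "finite (rowlists m g)"
  unfolding rowlists_def by (rule finite_lists_length_eq) simp

lemma rowlists_0[simp]: "rowlists 0 g = {[]}"
  unfolding rowlists_def by auto

lemma rowlists_Suc: "rowlists (Suc m) g = (\<lambda>(r, rs). r # rs) ` ({0..<g} \<times> rowlists m g)"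
  unfolding rowlists_def
  by (auto simp: length_Suc_conv image_iff)

lemma pderivs_D:
  assumes "\<forall>a \<in> set as. a \<ge> 1"
  shows "pderivs as (D g R) = (\<lambda>t. \<Sum>rs \<in> rowlists (length as) g. D g (lowr R as rs) t)"
  using assms
proof (induction as arbitrary: R)
  case Nil
  show ?case by (simp add: pderivs_def)
next
  case (Cons a as)
  have a: "a \<ge> 1" using Cons.prems by simp
  have IH: "pderivs as (D g R) = (\<lambda>t. \<Sum>rs \<in> rowlists (length as) g. D g (lowr R as rs) t)"
    using Cons by simp
  have "pderivs (a # as) (D g R) = pderiv_t a (pderivs as (D g R))"
    by (simp add: pderivs_def)
  also have "\<dots> = (\<lambda>t. \<Sum>rs \<in> rowlists (length as) g. \<Sum>r<g. D g ((lowr R as rs)(r := lowr R as rs r - int a)) t)"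
  proof
    fix t
    have "((\<lambda>s. \<Sum>rs \<in> rowlists (length as) g. D g (lowr R as rs) (t(a := s))) has_real_derivative
       (\<Sum>rs \<in> rowlists (length as) g. \<Sum>r<g. D g ((lowr R as rs)(r := lowr R as rs r - int a)) (t(a := t a)))) (at (t a))"
      by (rule DERIV_sum) (rule D_deriv[OF a])
    then show "pderiv_t a (pderivs as (D g R)) t = (\<Sum>rs \<in> rowlists (length as) g. \<Sum>r<g. D g ((lowr R as rs)(r := lowr R as rs r - int a)) t)"
      unfolding pderiv_t_def IH by (simp add: DERIV_imp_deriv)
  qed
  also have "\<dots> = (\<lambda>t. \<Sum>rs \<in> rowlists (length (a # as)) g. D g (lowr R (a # as) rs) t)"
  proof
    fix t
    have "(\<Sum>rs \<in> rowlists (length (a # as)) g. D g (lowr R (a # as) rs) t)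
       = (\<Sum>(r, rs) \<in> {0..<g} \<times> rowlists (length as) g. D g (lowr R (a # as) (r # rs)) t)"
      unfolding length_Cons rowlists_Suc
      by (subst sum.reindex) (auto simp: inj_on_def case_prod_unfold)
    also have "\<dots> = (\<Sum>r \<in> {0..<g}. \<Sum>rs \<in> rowlists (length as) g. D g (lowr R (a # as) (r # rs)) t)"
      by (rule sum.cartesian_product[symmetric])
    also have "\<dots> = (\<Sum>rs \<in> rowlists (length as) g. \<Sum>r<g. D g ((lowr R as rs)(r := lowr R as rs r - int a)) t)"
      by (subst sum.swap) (simp add: lowr_commute atLeast0LessThan)
    finally show "(\<Sum>rs \<in> rowlists (length as) g. \<Sum>r<g. D g ((lowr R as rs)(r := lowr R as rs r - int a)) t)
       = (\<Sum>rs \<in> rowlists (length (a # as)) g. D g (lowr R (a # as) rs) t)" by simp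
  qed
  finally show ?case .
qed



definition Lf :: "real \<Rightarrow> real fps" where "Lf y = 1 - fps_const y * fps_X"
definition Bf :: "real \<Rightarrow> real fps" where "Bf y = Abs_fps (\<lambda>n. if n = 0 then 0 else y ^ n / real n)"

primrec Qk :: "nat \<Rightarrow> (nat \<Rightarrow> real) \<Rightarrow> real fps" where
  "Qk 0 x = 1"
| "Qk (Suc k) x = Qk k x * Lf (x (Suc k))"

lemma Lf_nth: "fps_nth (f * Lf y) n = fps_nth f n - (if n = 0 then 0 else y * fps_nth f (n - 1))"
proof -
  have "f * Lf y = f - fps_const y * (f * fps_X)" by (simp add: Lf_def algebra_simps)
  then show ?thesis by (simp add: fps_X_mult_right_nth)
qed

lemma Lf_deriv: "fps_deriv (Lf y) = - fps_const y"
  by (simp add: Lf_def)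

lemma Bf_deriv_Lf: "fps_deriv (Bf y) * Lf y = fps_const y"
proof (rule fps_ext)
  fix n
  have d: "\<And>n. fps_nth (fps_deriv (Bf y)) n = y ^ Suc n"
    by (simp add: fps_deriv_nth Bf_def del: of_nat_Suc)
  show "fps_nth (fps_deriv (Bf y) * Lf y) n = fps_nth (fps_const y) n"
    unfolding Lf_nth d by (cases n) auto
qed

lemma Afps_Suc: "Afps (bracket_sum (Suc k) x) = Afps (bracket_sum k x) + Bf (x (Suc k))"
  by (rule fps_ext) (simp add: Afps_def Bf_def bracket_sum_def)

lemma Afps_0: "Afps (bracket_sum 0 x) = 0"
  by (rule fps_ext) (simp add: Afps_def bracket_sum_def)

lemma Qk_ode: "fps_deriv (Afps (bracket_sum k x)) * Qk k x + fps_deriv (Qk k x) = 0"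
proof (induction k)
  case 0
  then show ?case by (simp add: Afps_0)
next
  case (Suc k)
  let ?A = "fps_deriv (Afps (bracket_sum k x))" and ?Q = "Qk k x" and ?L = "Lf (x (Suc k))"
    and ?B = "fps_deriv (Bf (x (Suc k)))"
  have "fps_deriv (Afps (bracket_sum (Suc k) x)) * Qk (Suc k) x + fps_deriv (Qk (Suc k) x)
     = (?A * ?Q + fps_deriv ?Q) * ?L + ?Q * (?B * ?L + fps_deriv ?L)"
    by (simp add: Afps_Suc algebra_simps)
  also have "\<dots> = 0" using Suc.IH by (simp add: Bf_deriv_Lf Lf_deriv)
  finally show ?case .
qed

lemma Qk_0: "fps_nth (Qk k x) 0 = 1"
  by (induction k) (auto simp: Lf_def)

lemma Qk_deg: "s > k \<Longrightarrow> fps_nth (Qk k x) s = 0"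
proof (induction k arbitrary: s)
  case 0
  then show ?case by simp
next
  case (Suc k)
  then show ?case by (auto simp: Lf_nth)
qed

lemma Efps_Qk: "Efps (bracket_sum k x) * Qk k x = 1"
proof -
  let ?E = "Efps (bracket_sum k x)" and ?Q = "Qk k x"
  have "fps_deriv (?E * ?Q) = ?E * (fps_deriv (Afps (bracket_sum k x)) * ?Q + fps_deriv ?Q)"
    by (simp add: Efps_deriv algebra_simps)
  also have "\<dots> = 0" by (simp add: Qk_ode)
  finally have d: "fps_deriv (?E * ?Q) = 0" .
  have "?E * ?Q = fps_const (fps_nth (?E * ?Q) 0)" using d fps_deriv_eq_0_iff by blast
  also have "fps_nth (?E * ?Q) 0 = 1"
    using pfun_0[of "bracket_sum k x"] by (simp add: Qk_0 pfun_Efps)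
  finally show ?thesis by simp
qed

lemma pfun_annih:
  fixes m :: int
  shows "(\<Sum>s = 0..k. fps_nth (Qk k x) s * pfun (m - int s) (bracket_sum k x)) = (if m = 0 then 1 else 0)"
proof (cases "m < 0")
  case True
  then show ?thesis by simp
next
  case False
  then obtain n where n: "m = int n" by (metis nonneg_int_cases not_le)
  let ?E = "Efps (bracket_sum k x)" and ?Q = "Qk k x"
  have "(\<Sum>s = 0..k. fps_nth ?Q s * pfun (m - int s) (bracket_sum k x))
      = (\<Sum>s = 0..max k n. fps_nth ?Q s * pfun (m - int s) (bracket_sum k x))"
    by (intro sum.mono_neutral_left) (auto simp: Qk_deg n)
  also have "\<dots> = (\<Sum>s = 0..n. fps_nth ?Q s * pfun (m - int s) (bracket_sum k x))"
    by (intro sum.mono_neutral_right) (auto simp: Qk_deg n)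
  also have "\<dots> = (\<Sum>s = 0..n. fps_nth ?Q s * fps_nth ?E (n - s))"
    by (intro sum.cong refl) (auto simp: n pfun_nat[symmetric] of_nat_diff)
  also have "\<dots> = fps_nth (?E * ?Q) n"
    unfolding fps_mult_nth
    by (rule sum.reindex_bij_witness[where i = "\<lambda>s. n - s" and j = "\<lambda>s. n - s"]) auto
  also have "\<dots> = (if m = 0 then 1 else 0)" by (simp add: Efps_Qk n)
  finally show ?thesis .
qed



lemma DM_dims[simp]: "dim_row (DM g R t) = g" "dim_col (DM g R t) = g"
  by (simp_all add: DM_def)

lemma D_identical_rows:
  assumes "i < g" "i' < g" "i \<noteq> i'" "R i = R i'"
  shows "D g R t = 0"
  unfolding D_def
proof (rule det_identical_rows[OF DM_carrier assms(3,1,2)])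
  show "Matrix.row (DM g R t) i = Matrix.row (DM g R t) i'"
    by (rule eq_vecI) (use assms in auto)
qed

lemma D_missing_col:
  fixes k g j0 :: nat
  assumes "k \<le> j0" "j0 < g" and miss: "\<forall>i<g. R i + int j0 \<noteq> 0"
  shows "D g R (bracket_sum k x) = 0"
proof -
  let ?t = "bracket_sum k x" and ?Q = "Qk k x"
  define v where "v = Matrix.vec g (\<lambda>j. if j \<le> j0 \<and> j0 - j \<le> k then fps_nth ?Q (j0 - j) else 0)"
  have v: "v \<in> carrier_vec g" by (simp add: v_def)
  have vj0: "vec_index v j0 = 1" using assms by (simp add: v_def Qk_0)
  have vnz: "v \<noteq> 0\<^sub>v g"
  proof
    assume "v = 0\<^sub>v g"
    then have "vec_index v j0 = 0" using assms by simp
    with vj0 show False by simp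
  qed
  have "DM g R ?t *\<^sub>v v = 0\<^sub>v g"
  proof (rule eq_vecI)
    fix i assume i: "i < dim_vec (0\<^sub>v g :: real Matrix.vec)"
    then have i: "i < g" by simp
    let ?S = "{j \<in> {0..<g}. j \<le> j0 \<and> j0 - j \<le> k}"
    have "vec_index (DM g R ?t *\<^sub>v v) i = (\<Sum>j\<in>{0..<g}. pfun (R i + int j) ?t * vec_index v j)"
      using i by (simp add: scalar_prod_def v_def index_mult_mat_vec)
    also have "\<dots> = (\<Sum>j\<in>{0..<g}. if j \<le> j0 \<and> j0 - j \<le> k then pfun (R i + int j) ?t * fps_nth ?Q (j0 - j) else 0)"
      by (intro sum.cong refl) (simp add: v_def)
    also have "\<dots> = (\<Sum>j\<in>?S. pfun (R i + int j) ?t * fps_nth ?Q (j0 - j))"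
      by (simp only: sum.inter_filter[OF finite_atLeastLessThan])
    also have "?S = (\<lambda>s. j0 - s) ` {0..k}"
    proof
      show "?S \<subseteq> (\<lambda>s. j0 - s) ` {0..k}"
      proof
        fix j assume "j \<in> ?S"
        then show "j \<in> (\<lambda>s. j0 - s) ` {0..k}" by (intro image_eqI[where x = "j0 - j"]) auto
      qed
    qed (use assms in auto)
    also have "(\<Sum>j\<in>(\<lambda>s. j0 - s) ` {0..k}. pfun (R i + int j) ?t * fps_nth ?Q (j0 - j))
       = (\<Sum>s = 0..k. pfun (R i + int (j0 - s)) ?t * fps_nth ?Q (j0 - (j0 - s)))"
      using assms by (subst sum.reindex) (auto simp: inj_on_def)
    also have "\<dots> = (\<Sum>s = 0..k. fps_nth ?Q s * pfun ((R i + int j0) - int s) ?t)"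
      using assms by (intro sum.cong refl) (auto simp: of_nat_diff algebra_simps)
    also have "\<dots> = 0" using pfun_annih[of k x "R i + int j0"] miss i by simp
    finally show "vec_index (DM g R ?t *\<^sub>v v) i = vec_index (0\<^sub>v g) i" using i by simp
  qed simp
  then show ?thesis unfolding D_def
    using det_0_iff_vec_prod_zero[OF DM_carrier] v vnz by blast
qed



lemma lowr_untouched: "i \<notin> set rs \<Longrightarrow> lowr R as rs i = R i"
  by (induction R as rs rule: lowr.induct) auto

lemma lowr_touched:
  assumes "distinct rs" "length rs = length as" "l < length as"
  shows "lowr R as rs (rs ! l) = R (rs ! l) - int (as ! l)"
  using assms
proof (induction R as rs arbitrary: l rule: lowr.induct)
  case (1 R a as r rs)
  show ?case
  proof (cases l)
    case 0
    then show ?thesis using 1 by (simp add: lowr_untouched)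
  next
    case (Suc l')
    then have "rs ! l' \<noteq> r" using "1.prems" by (auto simp: nth_mem)
    then show ?thesis using "1.IH"[of l'] "1.prems" Suc by (simp add: fun_upd_def)
  qed
qed auto

lemma comb:
  fixes N v :: "nat \<Rightarrow> int" and as rs :: "nat list" and g k m :: nat
  assumes km: "k + m \<le> g"
    and len: "length as = m" and rs: "rs \<in> rowlists m g"
    and dec: "\<forall>i j. i < j \<longrightarrow> j < k + m \<longrightarrow> N j < N i"
    and lowT: "\<forall>i. k + m \<le> i \<longrightarrow> i < g \<longrightarrow> N i \<in> {0..<int (g - k)}"
    and highT: "\<forall>i < k + m. N i \<ge> int (g - k)"
    and vinc: "\<forall>l l'. l < l' \<longrightarrow> l' < m \<longrightarrow> v l < v l'"
    and Tsplit: "{0..<int (g - k)} \<subseteq> v ` {0..<m} \<union> N ` {k + m..<g}"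
    and aeq: "\<forall>l<m. int (as ! l) = N (k + l) - v l"
    and inj: "inj_on (lowr N as rs) {0..<g}"
    and cover: "{0..<int (g - k)} \<subseteq> lowr N as rs ` {0..<g}"
  shows "rs = [k..<k + m]"
proof -
  define P where "P = lowr N as rs"
  define T where "T = {0..<int (g - k)}"
  define U where "U = set rs"
  define X where "X = {k + m..<g}"
  define R' where "R' = {i \<in> {0..<g}. P i \<in> T}"
  have lrs: "length rs = m" and rsg: "set rs \<subseteq> {0..<g}" using rs by (auto simp: rowlists_def)
  have cardT: "card T = g - k" by (simp add: T_def)
  have R'sub: "R' \<subseteq> U \<union> X"
  proof
    fix i assume i: "i \<in> R'"
    show "i \<in> U \<union> X"
    proof (rule ccontr)
      assume "i \<notin> U \<union> X"
      then have "P i = N i" "i < k + m" using i by (auto simp: P_def U_def X_def R'_def lowr_untouched)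
      then show False using i highT by (auto simp: R'_def T_def)
    qed
  qed
  have "T \<subseteq> P ` R'" using cover by (auto simp: T_def P_def R'_def)
  then have "card T \<le> card (P ` R')" by (intro card_mono) (auto simp: R'_def)
  also have "\<dots> \<le> card R'" by (rule card_image_le) (simp add: R'_def)
  finally have c1: "g - k \<le> card R'" using cardT by simp
  have finUX: "finite (U \<union> X)" by (simp add: U_def X_def)
  have c2: "card R' \<le> card (U \<union> X)" by (rule card_mono[OF finUX R'sub])
  have cU: "card U \<le> m" using card_length[of rs] lrs by (simp add: U_def)
  have cX: "card X = g - k - m" by (simp add: X_def)
  have "card (U \<union> X) + card (U \<inter> X) = card U + card X"
    using card_Un_Int[of U X] by (simp add: U_def X_def)
  then have UX: "card (U \<inter> X) = 0" and cUm: "card U = m" and cUX: "card (U \<union> X) = g - k"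
    using c1 c2 cU cX km by linarith+
  have disj: "U \<inter> X = {}" using UX by (simp add: U_def X_def)
  have dist: "distinct rs" using cUm lrs by (simp add: U_def card_distinct)
  have R'eq: "R' = U \<union> X"
    using card_subset_eq[OF finUX R'sub] c1 c2 cUX by simp
  have land: "\<And>l. l < m \<Longrightarrow> P (rs ! l) \<in> v ` {0..<m}"
  proof -
    fix l assume l: "l < m"
    have ri: "rs ! l \<in> U" using l lrs by (simp add: U_def)
    then have inR: "rs ! l \<in> R'" using R'eq by simp
    then have PT: "P (rs ! l) \<in> T" by (simp add: R'_def)
    have "P (rs ! l) \<notin> N ` X"
    proof
      assume "P (rs ! l) \<in> N ` X"
      then obtain y where y: "y \<in> X" "P (rs ! l) = N y" by auto
      have "y \<notin> U" using y disj by auto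
      then have "P y = N y" by (simp add: P_def U_def lowr_untouched)
      moreover have "rs ! l \<noteq> y" using ri \<open>y \<notin> U\<close> by auto
      moreover have "rs ! l \<in> {0..<g}" "y \<in> {0..<g}" using ri rsg y by (auto simp: U_def X_def)
      ultimately show False using inj y unfolding P_def inj_on_def by metis
    qed
    then show "P (rs ! l) \<in> v ` {0..<m}" using PT Tsplit unfolding T_def X_def by blast
  qed
  have Ptouch: "\<And>l. l < m \<Longrightarrow> P (rs ! l) = N (rs ! l) - int (as ! l)"
    unfolding P_def using dist lrs len by (intro lowr_touched) auto
  have main: "\<And>d. d < m \<Longrightarrow> rs ! (m - 1 - d) = k + (m - 1 - d)"
  proof -
    fix d
    show "d < m \<Longrightarrow> rs ! (m - 1 - d) = k + (m - 1 - d)"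
    proof (induction d rule: less_induct)
      case (less d)
      define l where "l = m - 1 - d"
      have l: "l < m" using less.prems by (simp add: l_def)
      have IH: "\<And>l'. l < l' \<Longrightarrow> l' < m \<Longrightarrow> rs ! l' = k + l'"
      proof -
        fix l' assume "l < l'" "l' < m"
        then have "m - 1 - l' < d" "m - 1 - (m - 1 - l') = l'" by (auto simp: l_def)
        then show "rs ! l' = k + l'" using less.IH[of "m - 1 - l'"] \<open>l' < m\<close> by auto
      qed
      obtain l'' where l'': "l'' < m" "P (rs ! l) = v l''" using land[OF l] by auto
      have "l'' \<le> l"
      proof (rule ccontr)
        assume "\<not> l'' \<le> l"
        then have "l < l''" by simp
        then have r'': "rs ! l'' = k + l''" using IH l''(1) by simp
        have "P (rs ! l'') = N (k + l'') - int (as ! l'')" using Ptouch[OF l''(1)] r'' by simp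
        also have "\<dots> = v l''" using aeq l''(1) by simp
        finally have "P (rs ! l'') = P (rs ! l)" using l'' by simp
        moreover have "rs ! l'' \<in> {0..<g}" "rs ! l \<in> {0..<g}" using rsg l l''(1) lrs by (auto simp: nth_mem subset_iff)
        ultimately have "rs ! l'' = rs ! l" using inj unfolding P_def inj_on_def by blast
        then have "l'' = l" using dist l l''(1) lrs by (simp add: nth_eq_iff_index_eq)
        then show False using \<open>l < l''\<close> by simp
      qed
      then have vle: "v l'' \<le> v l"
      proof (cases "l'' = l")
        case False
        then show ?thesis using vinc l \<open>l'' \<le> l\<close> by (metis le_neq_implies_less less_imp_le)
      qed simp
      have "N (rs ! l) = v l'' + int (as ! l)" using Ptouch[OF l] l'' by simp
      also have "\<dots> \<le> v l + int (as ! l)" using vle by simp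
      also have "\<dots> = N (k + l)" using aeq l by simp
      finally have Nle: "N (rs ! l) \<le> N (k + l)" .
      have notX: "rs ! l < k + m"
      proof -
        have "rs ! l \<in> U" using l lrs by (simp add: U_def)
        then have "rs ! l \<notin> X" using disj by auto
        moreover have "rs ! l < g" using rsg l lrs by (auto simp: nth_mem subset_iff)
        ultimately show ?thesis by (simp add: X_def)
      qed
      have ge: "k + l \<le> rs ! l"
      proof (rule ccontr)
        assume "\<not> k + l \<le> rs ! l"
        then have "N (k + l) < N (rs ! l)" using dec l by simp
        then show False using Nle by simp
      qed
      have "rs ! l = k + l"
      proof (rule ccontr)
        assume ne: "rs ! l \<noteq> k + l"
        then have "k + l < rs ! l" using ge by simp
        then obtain l' where l': "l' = rs ! l - k" "l < l'" "l' < m" using notX by auto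
        then have "rs ! l' = k + l'" using IH by simp
        also have "\<dots> = rs ! l" using l' ge by simp
        finally have "l' = l" using dist l l'(3) lrs by (simp add: nth_eq_iff_index_eq)
        then show False using l' by simp
      qed
      then show ?case by (simp add: l_def)
    qed
  qed
  show ?thesis
  proof (rule nth_equalityI)
    show "length rs = length [k..<k + m]" using lrs by simp
    fix l assume "l < length rs"
    then have l: "l < m" using lrs by simp
    have "m - 1 - (m - 1 - l) = l" "m - 1 - l < m" using l by auto
    then show "rs ! l = [k..<k + m] ! l" using main[of "m - 1 - l"] l by simp
  qed
qed



lemma downclosed:
  fixes S :: "nat set"
  assumes "finite S" "\<forall>i\<in>S. 1 \<le> i" "\<forall>i\<in>S. \<forall>i'. 1 \<le> i' \<longrightarrow> i' \<le> i \<longrightarrow> i' \<in> S"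
  shows "S = {1..card S}"
proof (cases "S = {}")
  case True
  then show ?thesis by simp
next
  case False
  define M where "M = Max S"
  have MS: "M \<in> S" using assms False by (simp add: M_def)
  have "S = {1..M}"
  proof
    show "S \<subseteq> {1..M}" using assms by (auto simp: M_def)
    show "{1..M} \<subseteq> S" using assms MS by auto
  qed
  then show ?thesis by simp
qed

context
  fixes G :: "nat set" and g :: nat
  assumes gs: "is_gap_sequence G g"
begin

lemma gs_finite: "finite G" and gs_card: "card G = g" and gs_0: "0 \<notin> G" and gs_g: "g \<ge> 1"
  using gs by (auto simp: is_gap_sequence_def)

lemma len_sl: "length (sorted_list_of_set G) = g"
  by (simp add: gs_card)

lemma gap_mono: "1 \<le> i \<Longrightarrow> i < j \<Longrightarrow> j \<le> g \<Longrightarrow> gap G i < gap G j"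
  unfolding gap_def using sorted_wrt_nth_less[OF strict_sorted_list_of_set, of "i - 1" "j - 1" G] len_sl
  by simp

lemma gap_mono_iff: "1 \<le> i \<Longrightarrow> i \<le> g \<Longrightarrow> 1 \<le> j \<Longrightarrow> j \<le> g \<Longrightarrow> gap G i < gap G j \<longleftrightarrow> i < j"
  by (metis gap_mono less_asym nat_neq_iff)

lemma gap_in: "1 \<le> i \<Longrightarrow> i \<le> g \<Longrightarrow> gap G i \<in> G"
proof -
  assume "1 \<le> i" "i \<le> g"
  then have "sorted_list_of_set G ! (i - 1) \<in> set (sorted_list_of_set G)" using len_sl by (intro nth_mem) simp
  then show ?thesis using gs_finite by (simp add: gap_def)
qed

lemma gap_surj: "c \<in> G \<Longrightarrow> \<exists>i. 1 \<le> i \<and> i \<le> g \<and> gap G i = c"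
proof -
  assume "c \<in> G"
  then have "c \<in> set (sorted_list_of_set G)" using gs_finite by simp
  then obtain p where "p < g" "sorted_list_of_set G ! p = c" using len_sl by (metis in_set_conv_nth)
  then show ?thesis by (intro exI[of _ "Suc p"]) (simp add: gap_def)
qed

lemma gap_ge: "1 \<le> i \<Longrightarrow> i \<le> g \<Longrightarrow> i \<le> gap G i"
proof (induction i rule: nat_induct_at_least)
  case base
  then show ?case using gap_in[of 1] gs_0 by (cases "gap G 1") auto
next
  case (Suc n)
  then show ?case using gap_mono[of n "Suc n"] by simp
qed

lemma gap_diff:
  assumes "1 \<le> i" "i \<le> j" "j \<le> g"
  shows "j - i \<le> gap G j - gap G i"
  using assms(2,3)
proof (induction j rule: dec_induct)
  case base
  then show ?case by simp
next
  case (step n)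
  have "gap G i \<le> gap G n" using gap_mono[of i n] step assms(1) by (cases "i = n") auto
  moreover have "gap G n < gap G (Suc n)" using gap_mono[of n "Suc n"] step assms(1) by simp
  ultimately show ?case using step by arith
qed

lemma inf_comp: "infinite (- G)"
  using Diff_infinite_finite[OF gs_finite infinite_UNIV_nat] by (simp add: Compl_eq_Diff_UNIV)

lemma nongap_mono: "1 \<le> i \<Longrightarrow> i < j \<Longrightarrow> nongap G i < nongap G j"
  unfolding nongap_def using enumerate_mono[OF _ inf_comp] by simp

lemma nongap_notin: "nongap G j \<notin> G"
  unfolding nongap_def using enumerate_in_set[OF inf_comp] by simp

lemma nongap_surj: "c \<notin> G \<Longrightarrow> \<exists>j. 1 \<le> j \<and> nongap G j = c"
proof -
  assume "c \<notin> G"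
  then obtain n where "enumerate (- G) n = c" using enumerate_Ex[OF inf_comp] by auto
  then show ?thesis by (intro exI[of _ "Suc n"]) (simp add: nongap_def)
qed

lemma nongap_1: "nongap G 1 = 0"
  unfolding nongap_def using gs_0 by (simp add: enumerate_0 Least_eq_0)

lemma nongap_ge: "1 \<le> j \<Longrightarrow> j - 1 \<le> nongap G j"
proof (induction j rule: nat_induct_at_least)
  case base
  then show ?case by simp
next
  case (Suc n)
  then show ?case using nongap_mono[of n "Suc n"] by simp
qed

lemma nongap_neq_gap: "nongap G j \<noteq> gap G i" if "1 \<le> i" "i \<le> g"
  using nongap_notin gap_in[OF that] by metis

lemma mset_eq: "{i. 1 \<le> i \<and> nongap G i < g - k} = {1..m_k G g k}"
proof -
  let ?S = "{i. 1 \<le> i \<and> nongap G i < g - k}"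
  have fin: "finite ?S"
  proof (rule finite_subset)
    show "?S \<subseteq> {..g - k}" using nongap_ge by fastforce
  qed simp
  have "?S = {1..card ?S}"
  proof (rule downclosed[OF fin])
    show "\<forall>i\<in>?S. \<forall>i'. 1 \<le> i' \<longrightarrow> i' \<le> i \<longrightarrow> i' \<in> ?S"
    proof (intro ballI allI impI)
      fix i i' assume "i \<in> ?S" "1 \<le> i'" "i' \<le> i"
      then show "i' \<in> ?S" using nongap_mono[of i' i] by (cases "i' = i") auto
    qed
  qed auto
  then show ?thesis by (simp add: m_k_def)
qed

lemma m_pos: "k < g \<Longrightarrow> 1 \<le> m_k G g k"
proof -
  assume "k < g"
  then have "1 \<in> {i. 1 \<le> i \<and> nongap G i < g - k}" using nongap_1 by simp
  then have "1 \<in> {1..m_k G g k}" by (simp only: mset_eq)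
  then show ?thesis by simp
qed

lemma nongap_lt_iff: "1 \<le> j \<Longrightarrow> nongap G j < g - k \<longleftrightarrow> j \<le> m_k G g k"
  using mset_eq[of k] by (auto simp: set_eq_iff)

lemma m_le: "m_k G g k \<le> g - k"
proof -
  have "nongap G (m_k G g k) < g - k \<or> m_k G g k = 0"
    using nongap_lt_iff[of "m_k G g k" k] by auto
  then show ?thesis using nongap_ge[of "m_k G g k"] by (cases "m_k G g k") auto
qed

lemma gap_lt_iff:
  assumes "1 \<le> i" "i \<le> g" "k \<le> g"
  shows "gap G i < g - k \<longleftrightarrow> i \<le> g - k - m_k G g k"
proof -
  define m where "m = m_k G g k"
  let ?Gs = "{c \<in> G. c < g - k}"
  let ?Ns = "nongap G ` {1..m}"
  have split: "{0..<g - k} = ?Gs \<union> ?Ns"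
  proof
    show "{0..<g - k} \<subseteq> ?Gs \<union> ?Ns"
    proof
      fix c assume c: "c \<in> {0..<g - k}"
      show "c \<in> ?Gs \<union> ?Ns"
      proof (cases "c \<in> G")
        case False
        then obtain j where "1 \<le> j" "nongap G j = c" using nongap_surj by blast
        then show ?thesis using c nongap_lt_iff[of j k] by (auto simp: m_def)
      qed (use c in auto)
    qed
    show "?Gs \<union> ?Ns \<subseteq> {0..<g - k}" using nongap_lt_iff[of _ k] by (auto simp: m_def)
  qed
  have disj: "?Gs \<inter> ?Ns = {}" using nongap_notin by auto
  have injN: "inj_on (nongap G) {1..m}"
    by (rule inj_onI) (metis atLeastAtMost_iff nat_neq_iff nongap_mono)
  have "g - k = card (?Gs \<union> ?Ns)" using split by (metis card_atLeastLessThan diff_zero)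
  also have "\<dots> = card ?Gs + card ?Ns" by (rule card_Un_disjoint) (use disj gs_finite in auto)
  finally have "g - k = card ?Gs + card ?Ns" .
  then have cGs: "card ?Gs = g - k - m" using card_image[OF injN] by simp
  let ?I = "{i. 1 \<le> i \<and> i \<le> g \<and> gap G i < g - k}"
  have GsI: "?Gs = gap G ` ?I"
  proof
    show "?Gs \<subseteq> gap G ` ?I"
    proof
      fix c assume "c \<in> ?Gs"
      then obtain i where "1 \<le> i" "i \<le> g" "gap G i = c" using gap_surj by blast
      then show "c \<in> gap G ` ?I" using \<open>c \<in> ?Gs\<close> by auto
    qed
  qed (auto intro: gap_in)
  have injG: "inj_on (gap G) ?I"
    by (rule inj_onI) (metis (no_types, lifting) gap_mono_iff mem_Collect_eq nat_neq_iff)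
  have cI: "card ?I = g - k - m" using cGs GsI card_image[OF injG] by simp
  have finI: "finite ?I" by (rule finite_subset[of _ "{..g}"]) auto
  have "?I = {1..card ?I}"
  proof (rule downclosed[OF finI])
    show "\<forall>i\<in>?I. \<forall>i'. 1 \<le> i' \<longrightarrow> i' \<le> i \<longrightarrow> i' \<in> ?I"
    proof (intro ballI allI impI)
      fix i i' assume "i \<in> ?I" "1 \<le> i'" "i' \<le> i"
      then show "i' \<in> ?I" using gap_mono[of i' i] by (cases "i' = i") auto
    qed
  qed auto
  then have "?I = {1..g - k - m}" using cI by simp
  then show ?thesis using assms by (auto simp: set_eq_iff m_def)
qed

end



lemma lowr_shift: "lowr (\<lambda>i. R i + c) as rs = (\<lambda>i. lowr R as rs i + c)"
proof (induction R as rs rule: lowr.induct)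
  case (1 R a as r rs)
  have eq: "(\<lambda>i. R i + c)(r := R r + c - int a) = (\<lambda>i. (R(r := R r - int a)) i + c)" by auto
  have "lowr (\<lambda>i. R i + c) (a # as) (r # rs) = lowr ((\<lambda>i. R i + c)(r := R r + c - int a)) as rs"
    by simp
  also have "\<dots> = lowr (\<lambda>i. (R(r := R r - int a)) i + c) as rs" by (simp only: eq)
  also have "\<dots> = (\<lambda>i. lowr (R(r := R r - int a)) as rs i + c)" by (rule "1.IH")
  finally show ?case by (simp only: lowr.simps)
qed auto

lemma collapse:
  fixes R v :: "nat \<Rightarrow> int" and as :: "nat list" and g k m :: nat
  defines "N \<equiv> (\<lambda>i. R i + int (g - 1))"
  assumes km: "k + m \<le> g"
    and len: "length as = m" and pos: "\<forall>a\<in>set as. a \<ge> 1"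
    and dec: "\<forall>i j. i < j \<longrightarrow> j < k + m \<longrightarrow> N j < N i"
    and lowT: "\<forall>i. k + m \<le> i \<longrightarrow> i < g \<longrightarrow> N i \<in> {0..<int (g - k)}"
    and highT: "\<forall>i < k + m. N i \<ge> int (g - k)"
    and vinc: "\<forall>l l'. l < l' \<longrightarrow> l' < m \<longrightarrow> v l < v l'"
    and Tsplit: "{0..<int (g - k)} \<subseteq> v ` {0..<m} \<union> N ` {k + m..<g}"
    and aeq: "\<forall>l<m. int (as ! l) = N (k + l) - v l"
  shows "pderivs as (D g R) (bracket_sum k x) = D g (lowr R as [k..<k + m]) (bracket_sum k x)"
proof -
  let ?t = "bracket_sum k x" and ?rs0 = "[k..<k + m]"
  have rs0: "?rs0 \<in> rowlists m g" using km by (auto simp: rowlists_def)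
  have zero: "D g (lowr R as rs) ?t = 0" if rs: "rs \<in> rowlists m g" "rs \<noteq> ?rs0" for rs
  proof (rule ccontr)
    assume nz: "D g (lowr R as rs) ?t \<noteq> 0"
    have LN: "lowr N as rs = (\<lambda>i. lowr R as rs i + int (g - 1))"
      unfolding N_def by (rule lowr_shift)
    have inj: "inj_on (lowr N as rs) {0..<g}"
    proof (rule inj_onI, rule ccontr)
      fix i i' assume "i \<in> {0..<g}" "i' \<in> {0..<g}" "lowr N as rs i = lowr N as rs i'" "i \<noteq> i'"
      then have "D g (lowr R as rs) ?t = 0" unfolding LN by (intro D_identical_rows[of i g i']) auto
      with nz show False by simp
    qed
    have cover: "{0..<int (g - k)} \<subseteq> lowr N as rs ` {0..<g}"
    proof
      fix c assume c: "c \<in> {0..<int (g - k)}"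
      define j0 where "j0 = g - 1 - nat c"
      have j0: "k \<le> j0" "j0 < g" "int j0 = int (g - 1) - c" using c km by (auto simp: j0_def)
      have "\<exists>i<g. lowr R as rs i + int j0 = 0"
      proof (rule ccontr)
        assume "\<not> (\<exists>i<g. lowr R as rs i + int j0 = 0)"
        then have "D g (lowr R as rs) ?t = 0" using D_missing_col[OF j0(1,2)] by blast
        with nz show False by simp
      qed
      then obtain i where "i < g" "lowr R as rs i + int j0 = 0" by blast
      then show "c \<in> lowr N as rs ` {0..<g}" unfolding LN using j0(3)
        by (intro image_eqI[where x = i]) auto
    qed
    have "rs = ?rs0"
      by (rule comb[OF km len rs(1) dec lowT highT vinc Tsplit aeq inj cover])
    with rs(2) show False by simp
  qed
  have "pderivs as (D g R) ?t = (\<Sum>rs \<in> rowlists m g. D g (lowr R as rs) ?t)"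
    using pderivs_D[OF pos] len by simp
  also have "\<dots> = D g (lowr R as ?rs0) ?t"
    using zero rs0 by (subst sum.remove[OF rowlists_finite rs0]) (auto intro!: sum.neutral)
  finally show ?thesis .
qed

lemma D_permute:
  fixes R :: "nat \<Rightarrow> int" and \<sigma> :: "nat \<Rightarrow> nat"
  assumes kg: "k \<le> g" and sig: "\<sigma> permutes {0..<g - k}"
    and Rf: "\<forall>i<g. Rf i = (if i < k then R i else - int (k + \<sigma> (i - k)))"
  shows "D g Rf t = of_int (sign \<sigma>) * D g (\<lambda>i. if i < k then R i else - int i) t"
proof -
  define f where "f = (\<lambda>i::nat. i + k)"
  define \<pi> where "\<pi> = map_permutation {0..<g - k} f \<sigma>"
  let ?R0 = "\<lambda>i. if i < k then R i else - int i"
  have injf: "inj_on f {0..<g - k}" by (simp add: f_def inj_on_def)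
  have bij: "bij_betw f {0..<g - k} {k..<g}"
    unfolding f_def using kg
    by (auto simp: bij_betw_def inj_on_def image_iff intro!: exI[where x = "_ - k"])
  have pi_perm: "\<pi> permutes {k..<g}" unfolding \<pi>_def by (rule map_permutation_permutes[OF bij sig])
  have pi_perm': "\<pi> permutes {0..<g}" by (rule permutes_subset[OF pi_perm]) auto
  have pi_low: "\<pi> i = i" if "i < k" for i
    using pi_perm that by (intro permutes_not_in) auto
  have pi_high: "\<pi> i = \<sigma> (i - k) + k" if "k \<le> i" "i < g" for i
  proof -
    have "\<pi> (f (i - k)) = f (\<sigma> (i - k))" unfolding \<pi>_def
      by (rule map_permutation_apply[OF injf]) (use that in auto)
    then show ?thesis using that by (simp add: f_def)
  qed
  have sgn: "sign \<pi> = sign \<sigma>" unfolding \<pi>_def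
    by (rule sign_map_permutation[OF injf sig]) simp
  have "DM g Rf t = Matrix.mat g g (\<lambda>(i, j). DM g ?R0 t $$ (\<pi> i, j))"
  proof (rule eq_matI)
    fix i j assume ij: "i < dim_row (Matrix.mat g g (\<lambda>(i, j). DM g ?R0 t $$ (\<pi> i, j)))"
      "j < dim_col (Matrix.mat g g (\<lambda>(i, j). DM g ?R0 t $$ (\<pi> i, j)))"
    then have i: "i < g" and j: "j < g" by auto
    have pig: "\<pi> i < g" using permutes_in_image[OF pi_perm'] i by simp
    have "?R0 (\<pi> i) = Rf i"
    proof (cases "i < k")
      case True
      then show ?thesis using Rf i pi_low by simp
    next
      case False
      then show ?thesis using Rf i pi_high[of i] by simp
    qed
    then show "DM g Rf t $$ (i, j) = Matrix.mat g g (\<lambda>(i, j). DM g ?R0 t $$ (\<pi> i, j)) $$ (i, j)"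
      using i j pig by simp
  qed (simp_all)
  then have "D g Rf t = Determinant.det (Matrix.mat g g (\<lambda>(i, j). DM g ?R0 t $$ (\<pi> i, j)))"
    by (simp add: D_def)
  also have "\<dots> = signof \<pi> * D g ?R0 t"
    unfolding D_def by (rule det_permute_rows[OF DM_carrier pi_perm'])
  finally show ?thesis using sgn by simp
qed

lemma D_block:
  fixes R :: "nat \<Rightarrow> int"
  assumes kg: "k \<le> g"
  shows "D g (\<lambda>i. if i < k then R i else - int i) t = D k R t"
proof -
  let ?R0 = "\<lambda>i. if i < k then R i else - int i"
  define A2 where "A2 = Matrix.mat k (g - k) (\<lambda>(i, j). pfun (R i + int (j + k)) t)"
  define A4 where "A4 = Matrix.mat (g - k) (g - k) (\<lambda>(i, j). pfun (int j - int i) t)"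
  have eq: "DM g ?R0 t = four_block_mat (DM k R t) A2 (0\<^sub>m (g - k) k) A4"
  proof (rule eq_matI)
    fix i j assume "i < dim_row (four_block_mat (DM k R t) A2 (0\<^sub>m (g - k) k) A4)"
      "j < dim_col (four_block_mat (DM k R t) A2 (0\<^sub>m (g - k) k) A4)"
    then have i: "i < g" and j: "j < g" using kg by (auto simp: A4_def)
    show "DM g ?R0 t $$ (i, j) = four_block_mat (DM k R t) A2 (0\<^sub>m (g - k) k) A4 $$ (i, j)"
      using i j kg by (auto simp: A2_def A4_def algebra_simps)
  qed (use kg in \<open>auto simp: A4_def\<close>)
  have A4: "A4 \<in> carrier_mat (g - k) (g - k)" by (simp add: A4_def)
  have "Determinant.det A4 = prod_list (diag_mat A4)"
    by (rule det_upper_triangular[OF _ A4]) (auto simp: upper_triangular_def A4_def)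
  also have "\<dots> = 1"
  proof -
    have "diag_mat A4 = map (\<lambda>i. 1) [0..<g - k]"
      unfolding diag_mat_def by (intro map_cong) (auto simp: A4_def)
    then show ?thesis by (simp add: map_replicate_const)
  qed
  finally have d4: "Determinant.det A4 = 1" .
  show ?thesis unfolding D_def eq
    by (subst det_four_block_mat_lower_left_zero[OF DM_carrier _ refl A4]) (auto simp: A2_def d4)
qed



lemma schur_D: "length mu = g \<Longrightarrow> schur mu = D g (\<lambda>i. int (mu ! i) - int i)"
  by (auto simp: schur_def D_def DM_def fun_eq_iff algebra_simps)

lemma main_mu:
  fixes G :: "nat set" and g k :: nat and x :: "nat \<Rightarrow> real" and mu :: "nat list"
  assumes gs: "is_gap_sequence G g" and kg: "k < g" and len: "length mu = g"
    and decr: "\<forall>i j. i \<le> j \<and> j < g \<longrightarrow> mu ! j \<le> mu ! i"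
    and agree: "\<forall>i. k \<le> i \<and> i < g \<longrightarrow> mu ! i = gap_partition G g ! i"
  shows "pderivs (a_seq G g k) (schur mu) (bracket_sum k x)
           = of_int (c_sign G g k) * schur (take k mu) (bracket_sum k x)"
proof -
  define m where "m = m_k G g k"
  define L where "L = g - k - m"
  define R where "R = (\<lambda>i. int (mu ! i) - int i)"
  define N where "N = (\<lambda>i. R i + int (g - 1))"
  define v where "v = (\<lambda>l. int (nongap G (Suc l)))"
  define as where "as = a_seq G g k"
  let ?t = "bracket_sum k x"
  have m1: "1 \<le> m" using m_pos[OF gs kg] by (simp add: m_def)
  have mL: "m \<le> g - k" using m_le[OF gs] by (simp add: m_def)
  have glt: "\<And>i. 1 \<le> i \<Longrightarrow> i \<le> g \<Longrightarrow> gap G i < g - k \<longleftrightarrow> i \<le> L"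
    using gap_lt_iff[OF gs] kg by (simp add: L_def m_def)
  have nlt: "\<And>j. 1 \<le> j \<Longrightarrow> nongap G j < g - k \<longleftrightarrow> j \<le> m"
    using nongap_lt_iff[OF gs] by (simp add: m_def)
  have lam: "\<And>i. i < g \<Longrightarrow> gap_partition G g ! i = gap G (g - i) - (g - 1 - i)"
    by (simp add: gap_partition_def)
  have Nhigh: "\<And>i. k \<le> i \<Longrightarrow> i < g \<Longrightarrow> N i = int (gap G (g - i))"
  proof -
    fix i assume i: "k \<le> i" "i < g"
    have ge: "g - i \<le> gap G (g - i)" using gap_ge[OF gs, of "g - i"] i by simp
    have "mu ! i = gap G (g - i) - (g - 1 - i)" using agree lam i by simp
    then show "N i = int (gap G (g - i))" using ge i by (simp add: N_def R_def of_nat_diff)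
  qed
  have lenas: "length as = m" by (simp add: as_def a_seq_def m_def)
  have asl: "\<And>l. l < m \<Longrightarrow> as ! l = gap G (g - k - l) - nongap G (Suc l)"
  proof -
    fix l assume l: "l < m"
    have "g - k - Suc l + 1 = g - k - l" using l mL by simp
    moreover have "as ! l = (\<lambda>j. gap G (g - k - j + 1) - nongap G j) ([1..<m + 1] ! l)"
      unfolding as_def a_seq_def m_def[symmetric] using l by (intro nth_map) simp
    moreover have "[1..<m + 1] ! l = Suc l" using l by (subst nth_upt) auto
    ultimately show "as ! l = gap G (g - k - l) - nongap G (Suc l)" by simp
  qed
  have gbig: "\<And>l. l < m \<Longrightarrow> g - k \<le> gap G (g - k - l)"
  proof -
    fix l assume l: "l < m"
    have "1 \<le> g - k - l" "g - k - l \<le> g" "\<not> g - k - l \<le> L" using l mL by (auto simp: L_def)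
    then show "g - k \<le> gap G (g - k - l)" using glt[of "g - k - l"] by simp
  qed
  have nsmall: "\<And>l. l < m \<Longrightarrow> nongap G (Suc l) < g - k"
    using nlt by simp
  have aeq: "\<forall>l<m. int (as ! l) = N (k + l) - v l"
  proof (intro allI impI)
    fix l assume l: "l < m"
    have "N (k + l) = int (gap G (g - k - l))" using Nhigh[of "k + l"] l mL kg by (simp add: diff_diff_add)
    then show "int (as ! l) = N (k + l) - v l"
      using asl[OF l] gbig[OF l] nsmall[OF l] by (simp add: v_def of_nat_diff)
  qed
  have pos: "\<forall>a\<in>set as. a \<ge> 1"
  proof
    fix a assume "a \<in> set as"
    then obtain l where "l < m" "a = as ! l" using lenas by (metis in_set_conv_nth)
    then show "a \<ge> 1" using asl gbig nsmall by fastforce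
  qed
  have km: "k + m \<le> g" using mL kg by simp
  have gap_le: "\<And>a b. 1 \<le> a \<Longrightarrow> a \<le> b \<Longrightarrow> b \<le> g \<Longrightarrow> gap G a \<le> gap G b"
  proof -
    fix a b :: nat assume ab: "1 \<le> a" "a \<le> b" "b \<le> g"
    show "gap G a \<le> gap G b"
    proof (cases "a = b")
      case False
      then show ?thesis using gap_mono[OF gs, of a b] ab by simp
    qed simp
  qed
  have Nk: "\<And>i. i < k \<Longrightarrow> N k < N i"
  proof -
    fix i assume i: "i < k"
    have "mu ! k \<le> mu ! i" using decr i kg by simp
    then show "N k < N i" using i by (simp add: N_def R_def)
  qed
  have NkG: "N k = int (gap G (g - k))" using Nhigh kg by simp
  have dec: "\<forall>i j. i < j \<longrightarrow> j < k + m \<longrightarrow> N j < N i"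
  proof (intro allI impI)
    fix i j assume ij: "i < j" "j < k + m"
    show "N j < N i"
    proof (cases "j < k")
      case True
      have "mu ! j \<le> mu ! i" using decr ij True kg by simp
      then show ?thesis using ij by (simp add: N_def R_def)
    next
      case False
      then have Nj: "N j = int (gap G (g - j))" using Nhigh ij km by simp
      show ?thesis
      proof (cases "k \<le> i")
        case True
        then have "N i = int (gap G (g - i))" using Nhigh ij km by simp
        moreover have "gap G (g - j) < gap G (g - i)" using gap_mono[OF gs, of "g - j" "g - i"] ij km by simp
        ultimately show ?thesis using Nj by simp
      next
        case False
        then have "N k < N i" using Nk by simp
        moreover have "gap G (g - j) \<le> gap G (g - k)" using gap_le[of "g - j" "g - k"] ij km \<open>\<not> j < k\<close> by simp
        ultimately show ?thesis using Nj NkG by simp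
      qed
    qed
  qed
  have lowT: "\<forall>i. k + m \<le> i \<longrightarrow> i < g \<longrightarrow> N i \<in> {0..<int (g - k)}"
  proof (intro allI impI)
    fix i assume i: "k + m \<le> i" "i < g"
    have "gap G (g - i) < g - k" using glt[of "g - i"] i by (simp add: L_def)
    then show "N i \<in> {0..<int (g - k)}" using Nhigh[of i] i by simp
  qed
  have highT: "\<forall>i < k + m. N i \<ge> int (g - k)"
  proof (intro allI impI)
    fix i assume i: "i < k + m"
    have gk: "g - k \<le> gap G (g - k)" using gbig[of 0] m1 by simp
    show "N i \<ge> int (g - k)"
    proof (cases "k \<le> i")
      case True
      then have "g - k \<le> gap G (g - k - (i - k))" using gbig[of "i - k"] i by simp
      then show ?thesis using Nhigh[of i] True i km by simp
    next
      case False
      then show ?thesis using Nk[of i] NkG gk by simp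
    qed
  qed
  have vinc: "\<forall>l l'. l < l' \<longrightarrow> l' < m \<longrightarrow> v l < v l'"
    using nongap_mono[OF gs] by (simp add: v_def)
  have Tsplit: "{0..<int (g - k)} \<subseteq> v ` {0..<m} \<union> N ` {k + m..<g}"
  proof
    fix c assume c: "c \<in> {0..<int (g - k)}"
    then obtain c' where c': "c = int c'" "c' < g - k" by (metis atLeastLessThan_iff nonneg_int_cases of_nat_less_iff)
    show "c \<in> v ` {0..<m} \<union> N ` {k + m..<g}"
    proof (cases "c' \<in> G")
      case False
      then obtain j where j: "1 \<le> j" "nongap G j = c'" using nongap_surj[OF gs] by blast
      then have "j \<le> m" using nlt c' by auto
      then have "c = v (j - 1)" "j - 1 \<in> {0..<m}" using j c' by (auto simp: v_def)
      then show ?thesis by blast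
    next
      case True
      then obtain i where i: "1 \<le> i" "i \<le> g" "gap G i = c'" using gap_surj[OF gs] by blast
      then have "i \<le> L" using glt c' by auto
      then have "g - i \<in> {k + m..<g}" "N (g - i) = c" using i c' Nhigh[of "g - i"] km by (auto simp: L_def)
      then show ?thesis by (metis UnI2 image_eqI)
    qed
  qed
  have col: "pderivs as (D g R) ?t = D g (lowr R as [k..<k + m]) ?t"
    by (rule collapse[OF km lenas pos dec[unfolded N_def] lowT[unfolded N_def] highT[unfolded N_def]
          vinc Tsplit[unfolded N_def] aeq[unfolded N_def]])
  define \<sigma> where "\<sigma> = (\<lambda>i. if i < g - k then g - k - 1 - c_seq G g k ! i else i)"
  have cs1: "\<And>p. p < m \<Longrightarrow> c_seq G g k ! p = nongap G (Suc p)"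
  proof -
    fix p assume p: "p < m"
    have "c_seq G g k ! p = map (nongap G) [1..<m + 1] ! p"
      unfolding c_seq_def m_def[symmetric] using p by (simp add: nth_append del: upt_Suc)
    also have "\<dots> = nongap G (Suc p)" using p by (simp add: nth_upt del: upt_Suc)
    finally show "c_seq G g k ! p = nongap G (Suc p)" .
  qed
  have cs2: "\<And>p. m \<le> p \<Longrightarrow> p < g - k \<Longrightarrow> c_seq G g k ! p = gap G (g - k - p)"
  proof -
    fix p assume p: "m \<le> p" "p < g - k"
    have "c_seq G g k ! p = map (gap G) (rev [1..<L + 1]) ! (p - m)"
      unfolding c_seq_def m_def[symmetric] L_def[symmetric] using p by (simp add: nth_append del: upt_Suc)
    also have "\<dots> = gap G (rev [1..<L + 1] ! (p - m))" using p by (simp add: L_def del: upt_Suc)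
    also have "rev [1..<L + 1] ! (p - m) = [1..<L + 1] ! (L - 1 - (p - m))"
      using p by (simp add: rev_nth L_def del: upt_Suc)
    also have "\<dots> = g - k - p" using p by (simp add: nth_upt L_def del: upt_Suc)
    finally show "c_seq G g k ! p = gap G (g - k - p)" .
  qed
  have cs_lt: "\<And>p. p < g - k \<Longrightarrow> c_seq G g k ! p < g - k"
  proof -
    fix p assume p: "p < g - k"
    show "c_seq G g k ! p < g - k"
    proof (cases "p < m")
      case True
      then show ?thesis using cs1 nlt by simp
    next
      case False
      then show ?thesis using cs2[of p] p glt[of "g - k - p"] by (simp add: L_def)
    qed
  qed
  have cs_inj: "inj_on (\<lambda>p. c_seq G g k ! p) {0..<g - k}"
  proof (rule inj_onI)
    fix p q assume pq: "p \<in> {0..<g - k}" "q \<in> {0..<g - k}" "c_seq G g k ! p = c_seq G g k ! q"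
    have ng: "\<And>p q. p < m \<Longrightarrow> m \<le> q \<Longrightarrow> q < g - k \<Longrightarrow> c_seq G g k ! p \<noteq> c_seq G g k ! q"
      using cs1 cs2 nongap_neq_gap[OF gs] by simp
    show "p = q"
    proof (cases "p < m")
      case True
      show ?thesis
      proof (cases "q < m")
        case True
        then show ?thesis using \<open>p < m\<close> pq cs1 nongap_mono[OF gs] by (metis nat_neq_iff less_irrefl Suc_le_eq le_add1 plus_1_eq_Suc)
      next
        case False
        then show ?thesis using True pq ng by auto
      qed
    next
      case False
      show ?thesis
      proof (cases "q < m")
        case True
        then show ?thesis using False pq ng by (metis atLeastLessThan_iff not_less)
      next
        case False
        then have "gap G (g - k - p) = gap G (g - k - q)" using \<open>\<not> p < m\<close> pq cs2 by auto
        moreover have b: "1 \<le> g - k - p" "1 \<le> g - k - q" "g - k - p \<le> g" "g - k - q \<le> g" using pq by auto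
        ultimately have "\<not> g - k - p < g - k - q" "\<not> g - k - q < g - k - p"
          using gap_mono_iff[OF gs, of "g - k - p" "g - k - q"] gap_mono_iff[OF gs, of "g - k - q" "g - k - p"] by auto
        then have "g - k - p = g - k - q" by simp
        then show ?thesis using pq by auto
      qed
    qed
  qed
  have sig: "\<sigma> permutes {0..<g - k}"
  proof (rule bij_imp_permutes)
    have inj: "inj_on \<sigma> {0..<g - k}"
    proof (rule inj_onI)
      fix p q assume "p \<in> {0..<g - k}" "q \<in> {0..<g - k}" "\<sigma> p = \<sigma> q"
      moreover have "c_seq G g k ! p < g - k" "c_seq G g k ! q < g - k" using cs_lt \<open>p \<in> _\<close> \<open>q \<in> _\<close> by auto
      ultimately have "c_seq G g k ! p = c_seq G g k ! q" by (simp add: \<sigma>_def)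
      then show "p = q" using cs_inj \<open>p \<in> _\<close> \<open>q \<in> _\<close> by (meson inj_on_eq_iff)
    qed
    have sub: "\<sigma> ` {0..<g - k} \<subseteq> {0..<g - k}" by (auto simp: \<sigma>_def)
    show "bij_betw \<sigma> {0..<g - k} {0..<g - k}"
      unfolding bij_betw_def using inj endo_inj_surj[OF _ sub inj] by simp
  qed (simp add: \<sigma>_def)
  define Rf where "Rf = lowr R as [k..<k + m]"
  have Rf: "\<forall>i<g. Rf i = (if i < k then R i else - int (k + \<sigma> (i - k)))"
  proof (intro allI impI)
    fix i assume i: "i < g"
    show "Rf i = (if i < k then R i else - int (k + \<sigma> (i - k)))"
    proof (cases "i < k")
      case True
      then show ?thesis by (simp add: Rf_def lowr_untouched)
    next
      case False
      show ?thesis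
      proof (cases "i < k + m")
        case True
        let ?l = "i - k"
        have l: "?l < m" using True False by simp
        have ii: "[k..<k + m] ! ?l = i" using True False by simp
        have "Rf i = R i - int (as ! ?l)" unfolding Rf_def
          using lowr_touched[of "[k..<k + m]" as ?l R] ii l lenas by simp
        also have "\<dots> = v ?l - int (g - 1)" using aeq l False by (simp add: N_def)
        also have "\<dots> = - int (k + \<sigma> (i - k))"
          using cs1[OF l] nsmall[OF l] l mL kg by (simp add: \<sigma>_def v_def of_nat_diff)
        finally show ?thesis using False by simp
      next
        case False2: False
        have "Rf i = R i" using False2 by (simp add: Rf_def lowr_untouched)
        also have "\<dots> = int (gap G (g - i)) - int (g - 1)" using Nhigh[of i] False i by (simp add: N_def)
        also have "\<dots> = - int (k + \<sigma> (i - k))"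
        proof -
          have "c_seq G g k ! (i - k) = gap G (g - i)" using cs2[of "i - k"] False False2 i by simp
          moreover have "gap G (g - i) < g - k" using glt[of "g - i"] False2 i by (simp add: L_def)
          moreover have "i - k < g - k" using False i by simp
          ultimately show ?thesis using False i by (simp add: \<sigma>_def of_nat_diff)
        qed
        finally show ?thesis using False by simp
      qed
    qed
  qed
  have "pderivs (a_seq G g k) (schur mu) ?t = pderivs as (D g R) ?t"
    using schur_D[OF len] by (simp add: as_def R_def)
  also have "\<dots> = D g Rf ?t" using col by (simp add: Rf_def)
  also have "\<dots> = of_int (sign \<sigma>) * D g (\<lambda>i. if i < k then R i else - int i) ?t"
    by (rule D_permute[OF _ sig Rf]) (use kg in simp)
  also have "D g (\<lambda>i. if i < k then R i else - int i) ?t = D k R ?t"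
    by (rule D_block) (use kg in simp)
  also have "D k R ?t = schur (take k mu) ?t"
    using schur_D[of "take k mu" k] len kg by (auto simp: R_def intro!: D_cong)
  also have "sign \<sigma> = c_sign G g k" by (simp add: c_sign_def \<sigma>_def)
  finally show ?thesis .
qed

lemma gp_decr:
  assumes gs: "is_gap_sequence G g"
  shows "\<forall>i j. i \<le> j \<and> j < g \<longrightarrow> gap_partition G g ! j \<le> gap_partition G g ! i"
proof (intro allI impI)
  fix i j assume ij: "i \<le> j \<and> j < g"
  have a: "gap_partition G g ! i = gap G (g - i) - (g - 1 - i)" "gap_partition G g ! j = gap G (g - j) - (g - 1 - j)"
    using ij by (auto simp: gap_partition_def)
  have d: "(g - i) - (g - j) \<le> gap G (g - i) - gap G (g - j)"
  proof -
    have "1 \<le> g - j" "g - j \<le> g - i" "g - i \<le> g" using ij by auto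
    then show ?thesis by (rule gap_diff[OF gs])
  qed
  have e: "g - j \<le> gap G (g - j)"
  proof -
    have "1 \<le> g - j" "g - j \<le> g" using ij by auto
    then show ?thesis by (rule gap_ge[OF gs])
  qed
  have f: "gap G (g - j) \<le> gap G (g - i)"
  proof (cases "i = j")
    case False
    have "1 \<le> g - j" "g - j < g - i" "g - i \<le> g" using ij False by auto
    then show ?thesis using gap_mono[OF gs, of "g - j" "g - i"] by simp
  qed simp
  have e': "g - i \<le> gap G (g - i)"
  proof -
    have "1 \<le> g - i" "g - i \<le> g" using ij by auto
    then show ?thesis by (rule gap_ge[OF gs])
  qed
  have g1: "g - 1 - j \<le> gap G (g - j)" "g - 1 - i \<le> gap G (g - i)" using e e' ij by auto
  have "int (gap G (g - j) - (g - 1 - j)) \<le> int (gap G (g - i) - (g - 1 - i))"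
  proof -
    have "int (gap G (g - i)) - int (gap G (g - j)) \<ge> int (g - i) - int (g - j)"
      using d f ij by (simp add: of_nat_diff)
    then show ?thesis using g1 ij by (simp add: of_nat_diff)
  qed
  then show "gap_partition G g ! j \<le> gap_partition G g ! i" unfolding a by simp
qed

lemma case_kg:
  assumes "length mu = g"
  shows "pderivs (a_seq G g g) (schur mu) (bracket_sum g x)
           = of_int (c_sign G g g) * schur (take g mu) (bracket_sum g x)"
proof -
  have "m_k G g g = 0" by (simp add: m_k_def)
  then have "a_seq G g g = []" by (simp add: a_seq_def)
  moreover have "c_sign G g g = 1" by (simp add: c_sign_def)
  ultimately show ?thesis using assms by (simp add: pderivs_def)
qed

theorem theorem2p1:
  fixes G :: "nat set" and g k :: nat and x :: "nat \<Rightarrow> real"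
  assumes "is_gap_sequence G g" and "k \<le> g"
  shows "pderivs (a_seq G g k) (schur (gap_partition G g)) (bracket_sum k x)
           = of_int (c_sign G g k) * schur (take k (gap_partition G g)) (bracket_sum k x)
         \<and> (\<forall>mu :: nat list. length mu = g \<longrightarrow> (\<forall>i j. i \<le> j \<and> j < g \<longrightarrow> mu ! j \<le> mu ! i) \<longrightarrow>
           (\<forall>i. k \<le> i \<and> i < g \<longrightarrow> mu ! i = gap_partition G g ! i) \<longrightarrow>
           pderivs (a_seq G g k) (schur mu) (bracket_sum k x)
           = of_int (c_sign G g k) * schur (take k mu) (bracket_sum k x))"
proof (cases "k = g")
  case True
  have len: "length (gap_partition G g) = g" by (simp add: gap_partition_def)
  show ?thesis
  proof (intro conjI allI impI)
    show "pderivs (a_seq G g k) (schur (gap_partition G g)) (bracket_sum k x)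
           = of_int (c_sign G g k) * schur (take k (gap_partition G g)) (bracket_sum k x)"
      unfolding True by (rule case_kg[OF len])
    fix mu :: "nat list" assume "length mu = g"
    then show "pderivs (a_seq G g k) (schur mu) (bracket_sum k x)
           = of_int (c_sign G g k) * schur (take k mu) (bracket_sum k x)"
      unfolding True by (rule case_kg)
  qed
next
  case False
  then have kg: "k < g" using assms(2) by simp
  have len: "length (gap_partition G g) = g" by (simp add: gap_partition_def)
  show ?thesis
  proof (intro conjI allI impI)
    show "pderivs (a_seq G g k) (schur (gap_partition G g)) (bracket_sum k x)
           = of_int (c_sign G g k) * schur (take k (gap_partition G g)) (bracket_sum k x)"
      by (rule main_mu[OF assms(1) kg len gp_decr[OF assms(1)]]) simp
    fix mu :: "nat list" assume "length mu = g" "\<forall>i j. i \<le> j \<and> j < g \<longrightarrow> mu ! j \<le> mu ! i"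
      "\<forall>i. k \<le> i \<and> i < g \<longrightarrow> mu ! i = gap_partition G g ! i"
    then show "pderivs (a_seq G g k) (schur mu) (bracket_sum k x)
           = of_int (c_sign G g k) * schur (take k mu) (bracket_sum k x)"
      by (rule main_mu[OF assms(1) kg])
  qed
qed


end
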